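(* Consider the discrete-time system $x_{t+1} = A x_t + B u_t + E w_t + K$ with $x_t \in \mathbb{R}^{n_x}$, $u_t \in U \subseteq \mathbb{R}^{n_u}$, $w_t \in W \subseteq \mathbb{R}^{n_w}$, where $A \in \mathbb{R}^{n_x \times n_x}$ is invertible, $B \in \mathbb{R}^{n_x \times n_u}$, $E \in \mathbb{R}^{n_x \times n_w}$, $K \in \mathbb{R}^{n_x}$, $U$ is a zonotope, and $W$ is a polytope with vertex set $V = \{w_1,\dots,w_M\}$. Let $Z_0 \subseteq \mathbb{R}^{n_x}$ be a zonotope and define the backward reachable sets $X_0 = Z_0$ and, for $k \geq 0$, $$X_{k+1} = \{x \in \mathbb{R}^{n_x} \mid \exists u \in U\ \forall w \in W: Ax + Bu + Ew + K \in X_k\}.$$ Let $H, h$ satisfy $EW = \{x \mid Hx \leq h\}$, and fix constants $b_i > 0$, $d_i \geq 0$. For a zonotope $Z = ([g_1, \dots, g_N], c)$ define $\overline{\mathfrak{Z}}(Z, EW) = ([\overline{\alpha}_1 g_1, \dots, \overline{\alpha}_N g_N], \overline{c})$ where $(\theta, \overline{\alpha}, \overline{c})$ is a minimizer of $\min \sum_i b_i \alpha_i$ subject to $c' + \sum_i \theta_{ij} g_i = E w_j$ for all $j$ and $|\theta_{ij}| \leq \alpha_i \leq 1$, and define $\underline{\mathfrak{Z}}(Z, EW) = ([\underline{\alpha}_1 g_1, \dots, \underline{\alpha}_N g_N], \underline{c})$ where $(\underline{\alpha}, \underline{c})$ is a maximizer of $\max \sum_i d_i \log \alpha_i$ subject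 to $Hc' + |HG|\alpha \leq h$, $0 \leq \alpha \leq 1$ (with $G = [g_1,\dots,g_N]$). Define recursively $\underline{Z}_0 = \overline{Z}_0 = Z_0$ and $$\underline{Z}_{k+1} = A^{-1}\big(((\underline{Z}_k \ominus \overline{\mathfrak{Z}}(\underline{Z}_k, EW)) \oplus (-BU)) + (-K)\big),$$ $$\overline{Z}_{k+1} = A^{-1}\big(((\overline{Z}_k \ominus \underline{\mathfrak{Z}}(\overline{Z}_k, EW)) \oplus (-BU)) + (-K)\big),$$ assuming all the optimization problems involved have optimal solutions (so that these sequences are defined). Then $\underline{Z}_k \subseteq X_k \subseteq \overline{Z}_k$ for all $k \geq 0$.
   Context: A zonotope with generator-representation $(G, c)$, where $G = [g_1, \dots, g_N]$ and $c \in \mathbb{R}^n$, is the set $\{c + \sum_{i=1}^N \theta_i g_i \mid \theta_i \in [-1,1]\}$, denoted $(G,c)$. For a matrix $M$ and set $S$, $MS = \{Ms \mid s \in S\}$. Minkowski sum $X \oplus Y = \{x+y \mid x\in X, y\in Y\}$, $x + Y = \{x\}\oplus Y$, Minkowski difference $X \ominus Y = \{z \mid z + Y \subseteq X\}$. $|HG|$ denotes entrywise absolute value; vector inequalities are entrywise. *)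

theory Defs
  imports "HOL-Analysis.Analysis"
begin

definition zono :: "(real^'n) list \<Rightarrow> real^'n \<Rightarrow> (real^'n) set" where
  "zono G c = {c + (\<Sum>i<length G. \<theta> i *\<^sub>R G ! i) | \<theta>. \<forall>i<length G. \<bar>\<theta> i\<bar> \<le> 1}"

definition msum :: "('a::plus) set \<Rightarrow> 'a set \<Rightarrow> 'a set" where
  "msum X Y = {x + y | x y. x \<in> X \<and> y \<in> Y}"

definition mdiff :: "('a::plus) set \<Rightarrow> 'a set \<Rightarrow> 'a set" where
  "mdiff X Y = {z. (\<lambda>y. z + y) ` Y \<subseteq> X}"

definition scale_gens :: "(nat \<Rightarrow> real) \<Rightarrow> (real^'n) list \<Rightarrow> (real^'n) list" where
  "scale_gens \<alpha> G = map (\<lambda>i. \<alpha> i *\<^sub>R G ! i) [0..<length G]"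

primrec brs :: "real^'x^'x \<Rightarrow> real^'u^'x \<Rightarrow> real^'w^'x \<Rightarrow> real^'x \<Rightarrow>
    (real^'u) set \<Rightarrow> (real^'w) set \<Rightarrow> (real^'x) set \<Rightarrow> nat \<Rightarrow> (real^'x) set" where
  "brs A B E K U W Z0 0 = Z0"
| "brs A B E K U W Z0 (Suc k) =
     {x. \<exists>u\<in>U. \<forall>w\<in>W. A *v x + B *v u + E *v w + K \<in> brs A B E K U W Z0 k}"

text \<open>Feasibility of (theta, alpha, c') in the LP defining the outer zonotope
  overline-frak-Z(Z, EW); vertices are indexed by the elements of V.\<close>
definition outer_feasible :: "real^'w^'x \<Rightarrow> (real^'w) set \<Rightarrow> (real^'x) list \<Rightarrow>
    (nat \<Rightarrow> real^'w \<Rightarrow> real) \<Rightarrow> (nat \<Rightarrow> real) \<Rightarrow> real^'x \<Rightarrow> bool" where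
  "outer_feasible E V G \<theta> \<alpha> c' \<longleftrightarrow>
     (\<forall>v\<in>V. c' + (\<Sum>i<length G. \<theta> i v *\<^sub>R G ! i) = E *v v) \<and>
     (\<forall>i<length G. \<forall>v\<in>V. \<bar>\<theta> i v\<bar> \<le> \<alpha> i) \<and>
     (\<forall>i<length G. \<alpha> i \<le> 1)"

definition outer_minimizer :: "(nat \<Rightarrow> real) \<Rightarrow> real^'w^'x \<Rightarrow> (real^'w) set \<Rightarrow> (real^'x) list \<Rightarrow>
    (nat \<Rightarrow> real^'w \<Rightarrow> real) \<Rightarrow> (nat \<Rightarrow> real) \<Rightarrow> real^'x \<Rightarrow> bool" where
  "outer_minimizer b E V G \<theta> \<alpha> c' \<longleftrightarrow>
     outer_feasible E V G \<theta> \<alpha> c' \<and>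
     (\<forall>\<theta>' \<alpha>' c''. outer_feasible E V G \<theta>' \<alpha>' c'' \<longrightarrow>
        (\<Sum>i<length G. b i * \<alpha> i) \<le> (\<Sum>i<length G. b i * \<alpha>' i))"

definition inner_feasible :: "real^'x^'m \<Rightarrow> real^'m \<Rightarrow> (real^'x) list \<Rightarrow>
    (nat \<Rightarrow> real) \<Rightarrow> real^'x \<Rightarrow> bool" where
  "inner_feasible H h G \<alpha> c' \<longleftrightarrow>
     (\<forall>r. (H *v c') $ r + (\<Sum>i<length G. \<bar>(H *v (G ! i)) $ r\<bar> * \<alpha> i) \<le> h $ r) \<and>
     (\<forall>i<length G. 0 \<le> \<alpha> i \<and> \<alpha> i \<le> 1)"

text \<open>Objective sum_i d_i log alpha_i, valued in the extended reals with
  log 0 = -infinity and the convention 0 * log 0 = 0.\<close>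
definition log_obj :: "(nat \<Rightarrow> real) \<Rightarrow> nat \<Rightarrow> (nat \<Rightarrow> real) \<Rightarrow> ereal" where
  "log_obj d N \<alpha> = (\<Sum>i<N. if d i = 0 then 0
                            else if \<alpha> i \<le> 0 then -\<infinity> else ereal (d i * ln (\<alpha> i)))"

definition inner_maximizer :: "(nat \<Rightarrow> real) \<Rightarrow> real^'x^'m \<Rightarrow> real^'m \<Rightarrow> (real^'x) list \<Rightarrow>
    (nat \<Rightarrow> real) \<Rightarrow> real^'x \<Rightarrow> bool" where
  "inner_maximizer d H h G \<alpha> c' \<longleftrightarrow>
     inner_feasible H h G \<alpha> c' \<and>
     (\<forall>\<alpha>' c''. inner_feasible H h G \<alpha>' c'' \<longrightarrow>
        log_obj d (length G) \<alpha>' \<le> log_obj d (length G) \<alpha>)"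

end

theory Submission imports Defs begin

lemma zono_mem: "x \<in> zono G c \<longleftrightarrow> (\<exists>\<theta>. (\<forall>i<length G. \<bar>\<theta> i\<bar> \<le> 1) \<and> x = c + (\<Sum>i<length G. \<theta> i *\<^sub>R G ! i))"
  unfolding zono_def by auto

lemma scale_gens_len[simp]: "length (scale_gens \<alpha> G) = length G"
  by (simp add: scale_gens_def)

lemma scale_gens_nth[simp]: "i < length G \<Longrightarrow> scale_gens \<alpha> G ! i = \<alpha> i *\<^sub>R G ! i"
  by (simp add: scale_gens_def)

lemma zono_convex: "convex (zono G c)"
proof (rule convexI)
  fix x y and u v :: real
  assume x: "x \<in> zono G c" and y: "y \<in> zono G c" and u: "0 \<le> u" and v: "0 \<le> v" and uv: "u + v = 1"
  obtain t1 where t1: "\<forall>i<length G. \<bar>t1 i\<bar> \<le> 1" "x = c + (\<Sum>i<length G. t1 i *\<^sub>R G ! i)"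
    using x zono_mem by metis
  obtain t2 where t2: "\<forall>i<length G. \<bar>t2 i\<bar> \<le> 1" "y = c + (\<Sum>i<length G. t2 i *\<^sub>R G ! i)"
    using y zono_mem by metis
  define t where "t i = u * t1 i + v * t2 i" for i
  have "\<forall>i<length G. \<bar>t i\<bar> \<le> 1"
  proof (intro allI impI)
    fix i assume i: "i < length G"
    have "\<bar>t i\<bar> \<le> u * \<bar>t1 i\<bar> + v * \<bar>t2 i\<bar>"
      unfolding t_def using u v by (metis abs_mult abs_of_nonneg abs_triangle_ineq)
    also have "\<dots> \<le> u * 1 + v * 1"
      using t1 t2 i u v by (intro add_mono mult_left_mono) auto
    finally show "\<bar>t i\<bar> \<le> 1" using uv by simp
  qed
  moreover have "u *\<^sub>R x + v *\<^sub>R y = c + (\<Sum>i<length G. t i *\<^sub>R G ! i)"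
  proof -
    have "u *\<^sub>R x + v *\<^sub>R y = (u + v) *\<^sub>R c + ((\<Sum>i<length G. (u * t1 i) *\<^sub>R G ! i) + (\<Sum>i<length G. (v * t2 i) *\<^sub>R G ! i))"
      unfolding t1(2) t2(2) by (simp add: scaleR_add_right scaleR_sum_right scaleR_add_left algebra_simps)
    also have "\<dots> = c + (\<Sum>i<length G. t i *\<^sub>R G ! i)"
      using uv by (simp add: t_def scaleR_add_left sum.distrib)
    finally show ?thesis .
  qed
  ultimately show "u *\<^sub>R x + v *\<^sub>R y \<in> zono G c" using zono_mem by blast
qed

lemma outer_contains:
  assumes of: "outer_feasible E V G \<theta> \<alpha> c'" and fin: "finite V"
  shows "(\<lambda>w. E *v w) ` (convex hull V) \<subseteq> zono (scale_gens \<alpha> G) c'"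
proof -
  have vert: "E *v v \<in> zono (scale_gens \<alpha> G) c'" if v: "v \<in> V" for v
  proof -
    define t where "t i = (if \<alpha> i = 0 then 0 else \<theta> i v / \<alpha> i)" for i
    have b: "\<forall>i<length G. \<bar>\<theta> i v\<bar> \<le> \<alpha> i" using of v unfolding outer_feasible_def by blast
    have "\<forall>i<length (scale_gens \<alpha> G). \<bar>t i\<bar> \<le> 1"
    proof (intro allI impI)
      fix i assume "i < length (scale_gens \<alpha> G)"
      then have "\<bar>\<theta> i v\<bar> \<le> \<alpha> i" using b by simp
      then show "\<bar>t i\<bar> \<le> 1" unfolding t_def
        by (auto simp: abs_divide divide_le_eq)
    qed
    moreover have "E *v v = c' + (\<Sum>i<length (scale_gens \<alpha> G). t i *\<^sub>R scale_gens \<alpha> G ! i)"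
    proof -
      have "E *v v = c' + (\<Sum>i<length G. \<theta> i v *\<^sub>R G ! i)" using of v unfolding outer_feasible_def by metis
      also have "(\<Sum>i<length G. \<theta> i v *\<^sub>R G ! i) = (\<Sum>i<length G. t i *\<^sub>R scale_gens \<alpha> G ! i)"
      proof (rule sum.cong)
        fix i assume "i \<in> {..<length G}"
        then have "\<bar>\<theta> i v\<bar> \<le> \<alpha> i" "i < length G" using b by auto
        then show "\<theta> i v *\<^sub>R G ! i = t i *\<^sub>R scale_gens \<alpha> G ! i"
          unfolding t_def by auto
      qed simp
      finally show ?thesis by simp
    qed
    ultimately show ?thesis using zono_mem by blast
  qed
  have "(\<lambda>w. E *v w) ` (convex hull V) = convex hull ((\<lambda>w. E *v w) ` V)"
    by (rule convex_hull_linear_image) simp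
  also have "\<dots> \<subseteq> zono (scale_gens \<alpha> G) c'"
    by (rule hull_minimal) (use vert zono_convex in auto)
  finally show ?thesis .
qed

lemma inner_contained:
  fixes H :: "real^'x^'m"
  assumes inf: "inner_feasible H h G \<alpha> c'"
  shows "zono (scale_gens \<alpha> G) c' \<subseteq> {x. \<forall>r. (H *v x) $ r \<le> h $ r}"
proof
  fix y assume "y \<in> zono (scale_gens \<alpha> G) c'"
  then obtain t where t: "\<forall>i<length G. \<bar>t i\<bar> \<le> 1" "y = c' + (\<Sum>i<length G. t i *\<^sub>R (\<alpha> i *\<^sub>R G ! i))"
    unfolding zono_mem by auto
  have a: "\<forall>i<length G. 0 \<le> \<alpha> i \<and> \<alpha> i \<le> 1" using inf unfolding inner_feasible_def by blast
  show "y \<in> {x. \<forall>r. (H *v x) $ r \<le> h $ r}"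
  proof (clarify)
    fix r
    have "(H *v y) $ r = (H *v c') $ r + (\<Sum>i<length G. (t i * \<alpha> i) * (H *v (G ! i)) $ r)"
      unfolding t(2) by (simp add: matrix_vector_right_distrib matrix_vector_mult_scaleR linear_sum[OF matrix_vector_mul_linear])
    also have "\<dots> \<le> (H *v c') $ r + (\<Sum>i<length G. \<bar>(H *v (G ! i)) $ r\<bar> * \<alpha> i)"
    proof (rule add_left_mono, rule sum_mono)
      fix i assume "i \<in> {..<length G}"
      then have "\<bar>t i\<bar> \<le> 1" "0 \<le> \<alpha> i" using t a by auto
      then have "(t i * \<alpha> i) * (H *v (G ! i)) $ r \<le> \<bar>t i * \<alpha> i\<bar> * \<bar>(H *v (G ! i)) $ r\<bar>"
        by (metis abs_ge_self abs_mult)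
      also have "\<dots> \<le> \<alpha> i * \<bar>(H *v (G ! i)) $ r\<bar>"
        using \<open>\<bar>t i\<bar> \<le> 1\<close> \<open>0 \<le> \<alpha> i\<close> by (simp add: abs_mult mult_right_mono mult_left_le_one_le)
      finally show "(t i * \<alpha> i) * (H *v (G ! i)) $ r \<le> \<bar>(H *v (G ! i)) $ r\<bar> * \<alpha> i" by (simp add: mult.commute)
    qed
    also have "\<dots> \<le> h $ r" using inf unfolding inner_feasible_def by blast
    finally show "(H *v y) $ r \<le> h $ r" .
  qed
qed

theorem proposition5:
  fixes A :: "real^'x^'x" and B :: "real^'u^'x" and E :: "real^'w^'x" and K :: "real^'x"
    and GU :: "(real^'u) list" and cU :: "real^'u"
    and W V :: "(real^'w) set"
    and G0 :: "(real^'x) list" and c0 :: "real^'x"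
    and H :: "real^'x^'m" and h :: "real^'m"
    and b d :: "nat \<Rightarrow> real"
    and Gl Gu :: "nat \<Rightarrow> (real^'x) list" and cl cu :: "nat \<Rightarrow> real^'x"
    and \<theta>l :: "nat \<Rightarrow> nat \<Rightarrow> real^'w \<Rightarrow> real" and \<alpha>l :: "nat \<Rightarrow> nat \<Rightarrow> real" and cbl :: "nat \<Rightarrow> real^'x"
    and \<alpha>u :: "nat \<Rightarrow> nat \<Rightarrow> real" and cbu :: "nat \<Rightarrow> real^'x"
  assumes A_inv: "invertible A"
    and U_def: "U = zono GU cU"
    and W_poly: "finite V" "W = convex hull V" "V = {v. v extreme_point_of W}"
    and EW_H: "(\<lambda>w. E *v w) ` W = {x. \<forall>r. (H *v x) $ r \<le> h $ r}"
    and b_pos: "\<forall>i. b i > 0" and d_nonneg: "\<forall>i. d i \<ge> 0"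
    and init_l: "Gl 0 = G0" "cl 0 = c0"
    and init_u: "Gu 0 = G0" "cu 0 = c0"
    and opt_l: "\<forall>k. outer_minimizer b E V (Gl k) (\<theta>l k) (\<alpha>l k) (cbl k)"
    and opt_u: "\<forall>k. inner_maximizer d H h (Gu k) (\<alpha>u k) (cbu k)"
    and step_l: "\<forall>k. zono (Gl (Suc k)) (cl (Suc k)) =
        (\<lambda>y. matrix_inv A *v y) `
          ((\<lambda>y. y + (- K)) `
            msum (mdiff (zono (Gl k) (cl k)) (zono (scale_gens (\<alpha>l k) (Gl k)) (cbl k)))
                 (uminus ` (\<lambda>u. B *v u) ` U))"
    and step_u: "\<forall>k. zono (Gu (Suc k)) (cu (Suc k)) =
        (\<lambda>y. matrix_inv A *v y) `
          ((\<lambda>y. y + (- K)) `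
            msum (mdiff (zono (Gu k) (cu k)) (zono (scale_gens (\<alpha>u k) (Gu k)) (cbu k)))
                 (uminus ` (\<lambda>u. B *v u) ` U))"
  shows "\<forall>k. zono (Gl k) (cl k) \<subseteq> brs A B E K U W (zono G0 c0) k \<and>
             brs A B E K U W (zono G0 c0) k \<subseteq> zono (Gu k) (cu k)"
  proof -
  have AI: "A ** matrix_inv A = mat 1" "matrix_inv A ** A = mat 1"
    using A_inv unfolding invertible_def matrix_inv_def by (metis (mono_tags, lifting) someI_ex)+
  have AIv: "A *v (matrix_inv A *v y) = y" "matrix_inv A *v (A *v y) = y" for y
    using AI by (simp_all add: matrix_vector_mul_assoc)
  let ?X = "brs A B E K U W (zono G0 c0)"
  have EW: "(\<lambda>w. E *v w) ` W \<subseteq> zono (scale_gens (\<alpha>l k) (Gl k)) (cbl k)" for k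
    using outer_contains[of E V "Gl k" "\<theta>l k" "\<alpha>l k" "cbl k"] opt_l W_poly(1,2)
    unfolding outer_minimizer_def by blast
  have IW: "zono (scale_gens (\<alpha>u k) (Gu k)) (cbu k) \<subseteq> (\<lambda>w. E *v w) ` W" for k
    using inner_contained[of H h "Gu k" "\<alpha>u k" "cbu k"] opt_u EW_H
    unfolding inner_maximizer_def by blast
  show ?thesis
  proof
    fix k show "zono (Gl k) (cl k) \<subseteq> ?X k \<and> ?X k \<subseteq> zono (Gu k) (cu k)"
    proof (induction k)
      case 0
      then show ?case using init_l init_u by simp
    next
      case (Suc k)
      have L: "zono (Gl (Suc k)) (cl (Suc k)) \<subseteq> ?X (Suc k)"
      proof
        fix x assume "x \<in> zono (Gl (Suc k)) (cl (Suc k))"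
        then obtain z u where z: "z \<in> mdiff (zono (Gl k) (cl k)) (zono (scale_gens (\<alpha>l k) (Gl k)) (cbl k))"
          and u: "u \<in> U" and x: "x = matrix_inv A *v (z + - (B *v u) + - K)"
          using step_l unfolding msum_def by auto
        have Ax: "A *v x + B *v u + K = z" using x AIv by simp
        have "A *v x + B *v u + E *v w + K \<in> ?X k" if w: "w \<in> W" for w
        proof -
          have "E *v w \<in> zono (scale_gens (\<alpha>l k) (Gl k)) (cbl k)" using EW w by blast
          then have "z + E *v w \<in> zono (Gl k) (cl k)" using z unfolding mdiff_def by blast
          then have "z + E *v w \<in> ?X k" using Suc.IH by blast
          moreover have "A *v x + B *v u + E *v w + K = z + E *v w" using Ax by (simp add: algebra_simps)
          ultimately show ?thesis by metis
        qed
        then show "x \<in> ?X (Suc k)" using u by auto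
      qed
      have R: "?X (Suc k) \<subseteq> zono (Gu (Suc k)) (cu (Suc k))"
      proof
        fix x assume "x \<in> ?X (Suc k)"
        then obtain u where u: "u \<in> U" and h: "\<forall>w\<in>W. A *v x + B *v u + E *v w + K \<in> ?X k" by auto
        define z where "z = A *v x + B *v u + K"
        have "z \<in> mdiff (zono (Gu k) (cu k)) (zono (scale_gens (\<alpha>u k) (Gu k)) (cbu k))"
          unfolding mdiff_def
        proof (clarify)
          fix y assume "y \<in> zono (scale_gens (\<alpha>u k) (Gu k)) (cbu k)"
          then obtain w where w: "w \<in> W" "y = E *v w" using IW by blast
          have "A *v x + B *v u + E *v w + K \<in> zono (Gu k) (cu k)" using h w Suc.IH by blast
          then show "z + y \<in> zono (Gu k) (cu k)" unfolding z_def w(2) by (simp add: algebra_simps)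
        qed
        moreover have "x = matrix_inv A *v (z + - (B *v u) + - K)" unfolding z_def
          by (simp add: AIv)
        ultimately show "x \<in> zono (Gu (Suc k)) (cu (Suc k))"
          using step_u u unfolding msum_def by blast
      qed
      show ?case using L R by blast
    qed
  qed
qed

end
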